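(* Let $\Gamma$ be a finite multiset of ${\sf Frm_2}$-formulas and $\Delta$ a finite multiset of ${\sf Frm}$-formulas. If $\Gamma\Rightarrow\Delta$ is derivable in ${\sf GWF_{N_2}}$, then $\Gamma\Rightarrow\bigvee\Delta$ is derivable in ${\sf GWF^s_{N_2}}$.
   Context: Language: countably many atoms $p,q,\dots$, the constant $\bot$, and binary connectives $\wedge,\vee,\rightarrow$ ($\rightarrow$ is strict implication). ${\sf Frm}$ is the set of formulas built from atoms and $\bot$ with $\wedge,\vee,\rightarrow$; $A,B,C,D$ range over ${\sf Frm}$. Let $\supset$ be a new binary symbol (material implication) and ${\sf Frm_1}={\sf Frm}\cup\{A\supset B : A,B\in{\sf Frm}\}$ (no nesting of $\supset$). ${\sf Frm_2}$ is the smallest set containing ${\sf Frm_1}$ and closed under $\wedge$ and $\vee$; $X,Y,Z$ range over ${\sf Frm_2}$. Multi-succedent sequents are $\Gamma\Rightarrow\Delta$ with $\Gamma,\Delta$ finite multisets of ${\sf Frm_2}$-formulas. The calculus ${\sf GWF_{N_2}}$ has initial sequents $(id)$ $p,\Gamma\Rightarrow\Delta,p$ ($p$ an atom) and $(L_\bot)$ $\bot,\Gamma\Rightarrow\Delta$, and rules (premises / conclusion): $(L_\wedge)$ $X,Y,\Gamma\Rightarrow\Delta$ / $X\wedge Y,\Gamma\Rightarrow\Delta$; $(R_\wedge)$ $\Gamma\Rightarrow\Delta,X$ and $\Gamma\Rightarrow\Delta,Y$ / $\Gamma\Rightarrow\Delta,X\wedge Y$; $(L_\vee)$ $X,\Gamma\Rightarrow\Delta$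 and $Y,\Gamma\Rightarrow\Delta$ / $X\vee Y,\Gamma\Rightarrow\Delta$; $(R_\vee)$ $\Gamma\Rightarrow\Delta,X,Y$ / $\Gamma\Rightarrow\Delta,X\vee Y$; $(L_\supset)$ $\Gamma\Rightarrow\Delta,A$ and $B,\Gamma\Rightarrow\Delta$ / $A\supset B,\Gamma\Rightarrow\Delta$; $(R_\supset)$ $A,\Gamma\Rightarrow\Delta,B$ / $\Gamma\Rightarrow\Delta,A\supset B$; $(LR_\rightarrow)$ $C\supset D,A\Rightarrow B$ / $\Gamma,C\rightarrow D\Rightarrow\Delta,A\rightarrow B$; $(R_\rightarrow)$ $A\Rightarrow B$ / $\Gamma\Rightarrow\Delta,A\rightarrow B$. The single-succedent calculus ${\sf GWF^s_{N_2}}$ (sequents $\Gamma\Rightarrow Z$, $Z\in{\sf Frm_2}$) has initial sequents $(id^s)$ $p,\Gamma\Rightarrow p$ and $(L^s_\bot)$ $\bot,\Gamma\Rightarrow Z$, and rules: $(L^s_\wedge)$ $X,Y,\Gamma\Rightarrow Z$ / $X\wedge Y,\Gamma\Rightarrow Z$; $(R^s_\wedge)$ $\Gamma\Rightarrow X$ and $\Gamma\Rightarrow Y$ / $\Gamma\Rightarrow X\wedge Y$; $(L^s_\vee)$ $X,\Gamma\Rightarrow Z$ and $Y,\Gamma\Rightarrow Z$ / $X\vee Y,\Gamma\Rightarrow Z$; $(R^s_{\vee_l})$ $\Gamma\Rightarrow X$ / $\Gamma\Rightarrow X\vee Y$; $(R^s_{\vee_r})$ $\Gamma\Rightarrow Y$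 / $\Gamma\Rightarrow X\vee Y$; $(L^s_\supset)$ $A\supset B,\Gamma\Rightarrow A$ and $B,\Gamma\Rightarrow Z$ / $A\supset B,\Gamma\Rightarrow Z$; $(R^s_\supset)$ $A,\Gamma\Rightarrow B$ / $\Gamma\Rightarrow A\supset B$; $(LR^s_\rightarrow)$ $C\supset D,A\Rightarrow B$ / $\Gamma,C\rightarrow D\Rightarrow A\rightarrow B$; $(R^s_\rightarrow)$ $A\Rightarrow B$ / $\Gamma\Rightarrow A\rightarrow B$. In all rules $A,B,C,D\in{\sf Frm}$, $X,Y,Z\in{\sf Frm_2}$, $\Gamma,\Delta$ arbitrary finite multisets of ${\sf Frm_2}$-formulas. $\bigvee\Delta$ is the disjunction of the members of $\Delta$ (the empty disjunction being $\bot$). *)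

theory Defs
  imports Main "HOL-Library.Multiset"
begin

(* Formulas of Frm_2: atoms, bottom, conjunction, disjunction,
   strict implication (Imp) and material implication (MImp). *)
datatype fm = Atom nat | Bot | And fm fm | Or fm fm | Imp fm fm | MImp fm fm

fun isFrm :: "fm \<Rightarrow> bool" where
  "isFrm (Atom p) = True"
| "isFrm Bot = True"
| "isFrm (And A B) = (isFrm A \<and> isFrm B)"
| "isFrm (Or A B) = (isFrm A \<and> isFrm B)"
| "isFrm (Imp A B) = (isFrm A \<and> isFrm B)"
| "isFrm (MImp A B) = False"

definition isFrm1 :: "fm \<Rightarrow> bool" where
  "isFrm1 X \<longleftrightarrow> isFrm X \<or> (\<exists>A B. X = MImp A B \<and> isFrm A \<and> isFrm B)"

inductive isFrm2 :: "fm \<Rightarrow> bool" where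
  base: "isFrm1 X \<Longrightarrow> isFrm2 X"
| conj: "isFrm2 X \<Longrightarrow> isFrm2 Y \<Longrightarrow> isFrm2 (And X Y)"
| disj: "isFrm2 X \<Longrightarrow> isFrm2 Y \<Longrightarrow> isFrm2 (Or X Y)"

definition wfms :: "fm multiset \<Rightarrow> bool" where
  "wfms M \<longleftrightarrow> (\<forall>X\<in>#M. isFrm2 X)"

inductive GWF :: "fm multiset \<Rightarrow> fm multiset \<Rightarrow> bool" where
  id: "wfms \<Gamma> \<Longrightarrow> wfms \<Delta> \<Longrightarrow> GWF (add_mset (Atom p) \<Gamma>) (add_mset (Atom p) \<Delta>)"
| L_bot: "wfms \<Gamma> \<Longrightarrow> wfms \<Delta> \<Longrightarrow> GWF (add_mset Bot \<Gamma>) \<Delta>"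
| L_and: "GWF (add_mset X (add_mset Y \<Gamma>)) \<Delta> \<Longrightarrow> GWF (add_mset (And X Y) \<Gamma>) \<Delta>"
| R_and: "GWF \<Gamma> (add_mset X \<Delta>) \<Longrightarrow> GWF \<Gamma> (add_mset Y \<Delta>) \<Longrightarrow> GWF \<Gamma> (add_mset (And X Y) \<Delta>)"
| L_or: "GWF (add_mset X \<Gamma>) \<Delta> \<Longrightarrow> GWF (add_mset Y \<Gamma>) \<Delta> \<Longrightarrow> GWF (add_mset (Or X Y) \<Gamma>) \<Delta>"
| R_or: "GWF \<Gamma> (add_mset X (add_mset Y \<Delta>)) \<Longrightarrow> GWF \<Gamma> (add_mset (Or X Y) \<Delta>)"
| L_mimp: "isFrm A \<Longrightarrow> isFrm B \<Longrightarrow> GWF \<Gamma> (add_mset A \<Delta>) \<Longrightarrow> GWF (add_mset B \<Gamma>) \<Delta>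
           \<Longrightarrow> GWF (add_mset (MImp A B) \<Gamma>) \<Delta>"
| R_mimp: "isFrm A \<Longrightarrow> isFrm B \<Longrightarrow> GWF (add_mset A \<Gamma>) (add_mset B \<Delta>)
           \<Longrightarrow> GWF \<Gamma> (add_mset (MImp A B) \<Delta>)"
| LR_imp: "isFrm A \<Longrightarrow> isFrm B \<Longrightarrow> isFrm C \<Longrightarrow> isFrm D \<Longrightarrow> wfms \<Gamma> \<Longrightarrow> wfms \<Delta> \<Longrightarrow>
           GWF {#MImp C D, A#} {#B#} \<Longrightarrow> GWF (add_mset (Imp C D) \<Gamma>) (add_mset (Imp A B) \<Delta>)"
| R_imp: "isFrm A \<Longrightarrow> isFrm B \<Longrightarrow> wfms \<Gamma> \<Longrightarrow> wfms \<Delta> \<Longrightarrow>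
           GWF {#A#} {#B#} \<Longrightarrow> GWF \<Gamma> (add_mset (Imp A B) \<Delta>)"

inductive GWFs :: "fm multiset \<Rightarrow> fm \<Rightarrow> bool" where
  id: "wfms \<Gamma> \<Longrightarrow> GWFs (add_mset (Atom p) \<Gamma>) (Atom p)"
| L_bot: "wfms \<Gamma> \<Longrightarrow> isFrm2 Z \<Longrightarrow> GWFs (add_mset Bot \<Gamma>) Z"
| L_and: "GWFs (add_mset X (add_mset Y \<Gamma>)) Z \<Longrightarrow> GWFs (add_mset (And X Y) \<Gamma>) Z"
| R_and: "GWFs \<Gamma> X \<Longrightarrow> GWFs \<Gamma> Y \<Longrightarrow> GWFs \<Gamma> (And X Y)"
| L_or: "GWFs (add_mset X \<Gamma>) Z \<Longrightarrow> GWFs (add_mset Y \<Gamma>) Z \<Longrightarrow> GWFs (add_mset (Or X Y) \<Gamma>) Z"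
| R_or_l: "isFrm2 Y \<Longrightarrow> GWFs \<Gamma> X \<Longrightarrow> GWFs \<Gamma> (Or X Y)"
| R_or_r: "isFrm2 X \<Longrightarrow> GWFs \<Gamma> Y \<Longrightarrow> GWFs \<Gamma> (Or X Y)"
| L_mimp: "isFrm A \<Longrightarrow> isFrm B \<Longrightarrow> GWFs (add_mset (MImp A B) \<Gamma>) A \<Longrightarrow> GWFs (add_mset B \<Gamma>) Z
           \<Longrightarrow> GWFs (add_mset (MImp A B) \<Gamma>) Z"
| R_mimp: "isFrm A \<Longrightarrow> isFrm B \<Longrightarrow> GWFs (add_mset A \<Gamma>) B \<Longrightarrow> GWFs \<Gamma> (MImp A B)"
| LR_imp: "isFrm A \<Longrightarrow> isFrm B \<Longrightarrow> isFrm C \<Longrightarrow> isFrm D \<Longrightarrow> wfms \<Gamma> \<Longrightarrow>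
           GWFs {#MImp C D, A#} B \<Longrightarrow> GWFs (add_mset (Imp C D) \<Gamma>) (Imp A B)"
| R_imp: "isFrm A \<Longrightarrow> isFrm B \<Longrightarrow> wfms \<Gamma> \<Longrightarrow>
           GWFs {#A#} B \<Longrightarrow> GWFs \<Gamma> (Imp A B)"

fun bigOr :: "fm list \<Rightarrow> fm" where
  "bigOr [] = Bot"
| "bigOr [A] = A"
| "bigOr (A # B # xs) = Or A (bigOr (B # xs))"

end

theory Submission
  imports Defs
begin

lemma isFrm_Frm2: "isFrm A \<Longrightarrow> isFrm2 A"
  by (auto intro: isFrm2.base simp: isFrm1_def)

lemma isFrm2_And: "isFrm2 (And X Y) \<Longrightarrow> isFrm2 X \<and> isFrm2 Y"
  by (cases rule: isFrm2.cases) (auto simp: isFrm1_def intro: isFrm_Frm2)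
lemma isFrm2_Or: "isFrm2 (Or X Y) \<Longrightarrow> isFrm2 X \<and> isFrm2 Y"
  by (cases rule: isFrm2.cases) (auto simp: isFrm1_def intro: isFrm_Frm2)
lemma isFrm2_MImp: "isFrm2 (MImp X Y) \<Longrightarrow> isFrm X \<and> isFrm Y"
  by (cases rule: isFrm2.cases) (auto simp: isFrm1_def)

lemma wfms_add[simp]: "wfms (add_mset X M) \<longleftrightarrow> isFrm2 X \<and> wfms M"
  by (auto simp: wfms_def)
lemma wfms_plus[simp]: "wfms (M + N) \<longleftrightarrow> wfms M \<and> wfms N"
  by (auto simp: wfms_def)
lemma wfms_empty[simp]: "wfms {#}"
  by (auto simp: wfms_def)

lemma GWFs_wf: "GWFs G Z \<Longrightarrow> wfms G \<and> isFrm2 Z"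
proof (induction rule: GWFs.induct)
  case (id G p) then show ?case by (simp add: isFrm_Frm2)
next
  case (L_and X Y G Z) then show ?case by (simp add: isFrm2.conj)
next
  case (R_and G X Y) then show ?case by (simp add: isFrm2.conj)
next
  case (L_or X Y G Z) then show ?case by (simp add: isFrm2.disj)
next
  case (R_or_l Y G X) then show ?case by (simp add: isFrm2.disj)
next
  case (R_or_r Y G X) then show ?case by (simp add: isFrm2.disj)
next
  case (L_mimp A B G Z) then show ?case by simp
next
  case (R_mimp A B G) then show ?case by (simp add: isFrm2.base isFrm1_def)
next
  case (LR_imp A B C D G) then show ?case by (simp add: isFrm_Frm2)
next
  case (R_imp A B G) then show ?case by (simp add: isFrm_Frm2)
qed (simp_all add: isFrm_Frm2)

lemma weaken1: "GWFs G Z \<Longrightarrow> isFrm2 X \<Longrightarrow> GWFs (add_mset X G) Z"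
proof (induction rule: GWFs.induct)
  case (id G p) then show ?case
    using GWFs.id[of "add_mset X G" p] by (simp add: add_mset_commute)
next
  case (L_bot G Z) then show ?case
    using GWFs.L_bot[of "add_mset X G" Z] by (simp add: add_mset_commute)
next
  case (L_and X' Y G Z) then show ?case
    using GWFs.L_and[of X' Y "add_mset X G" Z] by (simp add: add_mset_commute)
next
  case (R_and G X Y) then show ?case by (simp add: GWFs.R_and)
next
  case (L_or X' G Z Y) then show ?case
    using GWFs.L_or[of X' "add_mset X G" Z Y] by (simp add: add_mset_commute)
next
  case (R_or_l Y G X) then show ?case by (simp add: GWFs.R_or_l)
next
  case (R_or_r Y G X) then show ?case by (simp add: GWFs.R_or_r)
next
  case (L_mimp A B G Z) then show ?case
    using GWFs.L_mimp[of A B "add_mset X G" Z] by (simp add: add_mset_commute)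
next
  case (R_mimp A B G) then show ?case
    using GWFs.R_mimp[of A B "add_mset X G"] by (simp add: add_mset_commute)
next
  case (LR_imp A B C D G) then show ?case
    using GWFs.LR_imp[of A B C D "add_mset X G"] by (simp add: add_mset_commute)
next
  case (R_imp A B G) then show ?case
    using GWFs.R_imp[of A B "add_mset X G"] by simp
qed

lemma weaken_plus: "GWFs G Z \<Longrightarrow> wfms S \<Longrightarrow> GWFs (G + S) Z"
proof (induction S)
  case empty then show ?case by simp
next
  case (add x S) then show ?case using weaken1[of "G+S" Z x] by simp
qed

lemma weaken: "GWFs G Z \<Longrightarrow> G \<subseteq># P \<Longrightarrow> wfms P \<Longrightarrow> GWFs P Z"
  by (metis subset_mset.add_diff_inverse weaken_plus wfms_plus)


lemma add_neq: "add_mset F G1 = add_mset H G \<Longrightarrow> F \<noteq> H \<Longrightarrow> \<exists>K. G1 = add_mset H K \<and> G = add_mset F K"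
  by (auto simp: add_eq_conv_ex)


lemma inv_gen:
  assumes "GWFs P Z" "P = add_mset H G" "wfms N"
    and "\<And>p. H \<noteq> Atom p" "H \<noteq> Bot" "\<And>C D. H \<noteq> Imp C D"
    and hA: "\<And>X Y G Z. H = And X Y \<Longrightarrow> GWFs (add_mset X (add_mset Y G)) Z \<Longrightarrow> GWFs (N + G) Z"
    and hO: "\<And>X Y G Z. H = Or X Y \<Longrightarrow> GWFs (add_mset X G) Z \<Longrightarrow> GWFs (add_mset Y G) Z \<Longrightarrow> GWFs (N + G) Z"
    and hM: "\<And>A B G Z. H = MImp A B \<Longrightarrow> GWFs (add_mset (MImp A B) G) A \<Longrightarrow> GWFs (add_mset B G) Z \<Longrightarrow> GWFs (N + G) Z"
  shows "GWFs (N + G) Z"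
  using assms(1,2)
proof (induction arbitrary: G rule: GWFs.induct)
  case (id G1 p)
  then obtain K where K: "G = add_mset (Atom p) K" "G1 = add_mset H K" using add_neq[of "Atom p" G1 H G] assms(4) by metis
  have "wfms K" using id.hyps K(2) by simp
  then show ?case using K assms(3) GWFs.id[of "N + K" p] by simp
next
  case (L_bot G1 Z)
  then obtain K where K: "G = add_mset Bot K" "G1 = add_mset H K" using add_neq[of Bot G1 H G] assms(5) by metis
  have "wfms K" using L_bot.hyps K(2) by simp
  then show ?case using K assms(3) L_bot.hyps GWFs.L_bot[of "N + K" Z] by simp
next
  case (L_and X1 Y1 G1 Z)
  show ?case
  proof (cases "And X1 Y1 = H")
    case True then have "G1 = G" using L_and.prems by simp
    then show ?thesis using L_and.hyps hA True by metis
  next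
    case False
    then obtain K where K: "G = add_mset (And X1 Y1) K" "G1 = add_mset H K" using add_neq[of "And X1 Y1" G1 H G] L_and.prems by blast
    have "GWFs (N + add_mset X1 (add_mset Y1 K)) Z"
      using L_and.IH[of "add_mset X1 (add_mset Y1 K)"] K by (simp add: add_mset_commute)
    then show ?thesis using K GWFs.L_and[of X1 Y1 "N + K" Z] by simp
  qed
next
  case (R_and G1 X1 Y1) then show ?case by (simp add: GWFs.R_and)
next
  case (L_or X1 G1 Z Y1)
  show ?case
  proof (cases "Or X1 Y1 = H")
    case True then have "G1 = G" using L_or.prems by simp
    then show ?thesis using L_or.hyps hO True by metis
  next
    case False
    then obtain K where K: "G = add_mset (Or X1 Y1) K" "G1 = add_mset H K" using add_neq[of "Or X1 Y1" G1 H G] L_or.prems by blast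
    have "GWFs (N + add_mset X1 K) Z"
      using L_or.IH(1)[of "add_mset X1 K"] K by (simp add: add_mset_commute)
    moreover have "GWFs (N + add_mset Y1 K) Z"
      using L_or.IH(2)[of "add_mset Y1 K"] K by (simp add: add_mset_commute)
    ultimately show ?thesis using K GWFs.L_or[of X1 "N + K" Z Y1] by simp
  qed
next
  case (R_or_l Y1 G1 X1) then show ?case by (simp add: GWFs.R_or_l)
next
  case (R_or_r X1 G1 Y1) then show ?case by (simp add: GWFs.R_or_r)
next
  case (L_mimp A B G1 Z)
  show ?case
  proof (cases "MImp A B = H")
    case True then have "G1 = G" using L_mimp.prems by simp
    then show ?thesis using L_mimp.hyps hM True by metis
  next
    case False
    then obtain K where K: "G = add_mset (MImp A B) K" "G1 = add_mset H K" using add_neq[of "MImp A B" G1 H G] L_mimp.prems by blast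
    have "GWFs (N + add_mset (MImp A B) K) A"
      using L_mimp.IH(1)[of "add_mset (MImp A B) K"] K by (simp add: add_mset_commute)
    moreover have "GWFs (N + add_mset B K) Z"
      using L_mimp.IH(2)[of "add_mset B K"] K by (simp add: add_mset_commute)
    ultimately show ?thesis using K L_mimp.hyps GWFs.L_mimp[of A B "N + K" Z] by simp
  qed
next
  case (R_mimp A B G1)
  have "GWFs (N + add_mset A G) B"
    using R_mimp.IH[of "add_mset A G"] R_mimp.prems by (simp add: add_mset_commute)
  then show ?case using R_mimp.hyps GWFs.R_mimp[of A B "N + G"] by simp
next
  case (LR_imp A B C D G1)
  then obtain K where K: "G = add_mset (Imp C D) K" "G1 = add_mset H K" using add_neq[of "Imp C D" G1 H G] assms(6) by metis
  have "wfms K" using LR_imp.hyps K(2) by simp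
  then show ?case using K assms(3) LR_imp.hyps GWFs.LR_imp[of A B C D "N + K"] by simp
next
  case (R_imp A B G1)
  have "wfms G" using R_imp.hyps R_imp.prems by simp
  then show ?case using assms(3) R_imp.hyps GWFs.R_imp[of A B "N + G"] by simp

qed

lemma inv_and: assumes a: "GWFs (add_mset (And X Y) G) Z" shows "GWFs (add_mset X (add_mset Y G)) Z"
proof -
  have w: "wfms {#X, Y#}" using GWFs_wf[OF a] isFrm2_And[of X Y] by simp
  have "GWFs ({#X, Y#} + G) Z"
  proof (rule inv_gen[OF a refl w])
  qed simp_all
  then show ?thesis by simp
qed

lemma inv_or_l: assumes a: "GWFs (add_mset (Or X Y) G) Z" shows "GWFs (add_mset X G) Z"
proof -
  have w: "wfms {#X#}" using GWFs_wf[OF a] isFrm2_Or[of X Y] by simp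
  have "GWFs ({#X#} + G) Z"
  proof (rule inv_gen[OF a refl w])
  qed simp_all
  then show ?thesis by simp
qed

lemma inv_or_r: assumes a: "GWFs (add_mset (Or X Y) G) Z" shows "GWFs (add_mset Y G) Z"
proof -
  have w: "wfms {#Y#}" using GWFs_wf[OF a] isFrm2_Or[of X Y] by simp
  have "GWFs ({#Y#} + G) Z"
  proof (rule inv_gen[OF a refl w])
  qed simp_all
  then show ?thesis by simp
qed

lemma inv_mimp: assumes a: "GWFs (add_mset (MImp A B) G) Z" shows "GWFs (add_mset B G) Z"
proof -
  have w: "wfms {#B#}" using GWFs_wf[OF a] isFrm2_MImp[of A B] isFrm_Frm2[of B] by simp
  have "GWFs ({#B#} + G) Z"
  proof (rule inv_gen[OF a refl w])
  qed simp_all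
  then show ?thesis by simp
qed



lemma add_neq2: "add_mset F G1 = add_mset X (add_mset X G) \<Longrightarrow> F \<noteq> X \<Longrightarrow> \<exists>K. G1 = add_mset X (add_mset X K) \<and> G = add_mset F K"
proof -
  assume a: "add_mset F G1 = add_mset X (add_mset X G)" "F \<noteq> X"
  then obtain K where K: "G1 = add_mset X K" "add_mset X G = add_mset F K" using add_neq by metis
  then obtain K' where "K = add_mset X K'" "G = add_mset F K'" using add_neq[of X G F K] a(2) by metis
  then show ?thesis using K by blast
qed

lemma mem_split: "F \<in># add_mset X (add_mset X G) \<Longrightarrow> \<exists>K. add_mset X G = add_mset F K"
  by (metis insert_DiffM mset_add set_mset_add_mset_insert insert_iff union_single_eq_member)

lemma contr: "GWFs (add_mset X (add_mset X G)) Z \<Longrightarrow> GWFs (add_mset X G) Z"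
proof (induction "size X" arbitrary: X G Z rule: less_induct)
  case less
  have IHo: "\<And>X' G Z. size X' < size X \<Longrightarrow> GWFs (add_mset X' (add_mset X' G)) Z \<Longrightarrow> GWFs (add_mset X' G) Z"
    using less.hyps by blast
  have main: "GWFs P Z \<Longrightarrow> P = add_mset X (add_mset X G) \<Longrightarrow> GWFs (add_mset X G) Z" for P G Z
  proof (induction arbitrary: G rule: GWFs.induct)
    case (id G1 p)
    then obtain K where K: "add_mset X G = add_mset (Atom p) K" using mem_split[of "Atom p" X G]
      by (metis union_single_eq_member)
    have "wfms (add_mset X (add_mset X G))" using GWFs_wf[OF GWFs.id[OF id.hyps, of p]] id.prems by simp
    then have "wfms (add_mset X G)" by simp
    then have "wfms K" using K by (metis wfms_add)
    then show ?case using K GWFs.id by simp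
  next
    case (L_bot G1 Z)
    then obtain K where K: "add_mset X G = add_mset Bot K" using mem_split[of Bot X G]
      by (metis union_single_eq_member)
    have "wfms (add_mset X (add_mset X G))" using GWFs_wf[OF GWFs.L_bot[OF L_bot.hyps]] L_bot.prems by simp
    then have "wfms (add_mset X G)" by simp
    then have "wfms K" using K by (metis wfms_add)
    then show ?case using K L_bot.hyps GWFs.L_bot by simp
  next
    case (L_and X1 Y1 G1 Z)
    show ?case
    proof (cases "And X1 Y1 = X")
      case True
      then have G1: "G1 = add_mset X G" using L_and.prems by simp
      have "GWFs (add_mset (And X1 Y1) (add_mset X1 (add_mset Y1 G))) Z"
        using L_and.hyps G1 True by (simp add: add_mset_commute)
      then have "GWFs (add_mset X1 (add_mset Y1 (add_mset X1 (add_mset Y1 G)))) Z"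
        by (rule inv_and)
      then have "GWFs (add_mset X1 (add_mset X1 (add_mset Y1 (add_mset Y1 G)))) Z"
        by (simp add: add_mset_commute)
      moreover have "size X1 < size X" using True by auto
      ultimately have "GWFs (add_mset X1 (add_mset Y1 (add_mset Y1 G))) Z"
        using IHo[of X1 "add_mset Y1 (add_mset Y1 G)" Z] by blast
      then have "GWFs (add_mset Y1 (add_mset Y1 (add_mset X1 G))) Z"
        by (simp add: add_mset_commute)
      moreover have "size Y1 < size X" using True by auto
      ultimately have "GWFs (add_mset Y1 (add_mset X1 G)) Z"
        using IHo[of Y1 "add_mset X1 G" Z] by blast
      then have "GWFs (add_mset X1 (add_mset Y1 G)) Z" by (simp add: add_mset_commute)
      then show ?thesis using True GWFs.L_and[of X1 Y1 G Z] by simp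
    next
      case False
      then obtain K where K: "G1 = add_mset X (add_mset X K)" "G = add_mset (And X1 Y1) K"
        using add_neq2[of "And X1 Y1" G1 X G] L_and.prems by blast
      have "GWFs (add_mset X (add_mset X1 (add_mset Y1 K))) Z"
        using L_and.IH[of "add_mset X1 (add_mset Y1 K)"] K by (simp add: add_mset_commute)
      then show ?thesis using K GWFs.L_and[of X1 Y1 "add_mset X K" Z] by (simp add: add_mset_commute)
    qed
  next
    case (R_and G1 X1 Y1) then show ?case by (simp add: GWFs.R_and)
  next
    case (L_or X1 G1 Z Y1)
    show ?case
    proof (cases "Or X1 Y1 = X")
      case True
      then have G1: "G1 = add_mset X G" using L_or.prems by simp
      have "GWFs (add_mset (Or X1 Y1) (add_mset X1 G)) Z"
        using L_or.hyps G1 True by (simp add: add_mset_commute)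
      then have "GWFs (add_mset X1 (add_mset X1 G)) Z" by (rule inv_or_l)
      then have 1: "GWFs (add_mset X1 G) Z" using IHo[of X1 G Z] True by fastforce
      have "GWFs (add_mset (Or X1 Y1) (add_mset Y1 G)) Z"
        using L_or.hyps G1 True by (simp add: add_mset_commute)
      then have "GWFs (add_mset Y1 (add_mset Y1 G)) Z" by (rule inv_or_r)
      then have 2: "GWFs (add_mset Y1 G) Z" using IHo[of Y1 G Z] True by fastforce
      show ?thesis using True GWFs.L_or[OF 1 2] by simp
    next
      case False
      then obtain K where K: "G1 = add_mset X (add_mset X K)" "G = add_mset (Or X1 Y1) K"
        using add_neq2[of "Or X1 Y1" G1 X G] L_or.prems by blast
      have "GWFs (add_mset X (add_mset X1 K)) Z"
        using L_or.IH(1)[of "add_mset X1 K"] K by (simp add: add_mset_commute)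
      moreover have "GWFs (add_mset X (add_mset Y1 K)) Z"
        using L_or.IH(2)[of "add_mset Y1 K"] K by (simp add: add_mset_commute)
      ultimately show ?thesis using K GWFs.L_or[of X1 "add_mset X K" Z Y1] by (simp add: add_mset_commute)
    qed
  next
    case (R_or_l Y1 G1 X1) then show ?case by (simp add: GWFs.R_or_l)
  next
    case (R_or_r X1 G1 Y1) then show ?case by (simp add: GWFs.R_or_r)
  next
    case (L_mimp A B G1 Z)
    show ?case
    proof (cases "MImp A B = X")
      case True
      then have G1: "G1 = add_mset X G" using L_mimp.prems by simp
      have 1: "GWFs (add_mset X G) A" using L_mimp.IH(1)[of G] G1 True by simp
      have "GWFs (add_mset (MImp A B) (add_mset B G)) Z"
        using L_mimp.hyps G1 True by (simp add: add_mset_commute)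
      then have "GWFs (add_mset B (add_mset B G)) Z" by (rule inv_mimp)
      then have 2: "GWFs (add_mset B G) Z" using IHo[of B G Z] True by fastforce
      show ?thesis using True GWFs.L_mimp[OF L_mimp.hyps(1,2) _ 2] 1 by simp
    next
      case False
      then obtain K where K: "G1 = add_mset X (add_mset X K)" "G = add_mset (MImp A B) K"
        using add_neq2[of "MImp A B" G1 X G] L_mimp.prems by blast
      have "GWFs (add_mset X (add_mset (MImp A B) K)) A"
        using L_mimp.IH(1)[of "add_mset (MImp A B) K"] K by (simp add: add_mset_commute)
      moreover have "GWFs (add_mset X (add_mset B K)) Z"
        using L_mimp.IH(2)[of "add_mset B K"] K by (simp add: add_mset_commute)
      ultimately show ?thesis using K L_mimp.hyps GWFs.L_mimp[of A B "add_mset X K" Z] by (simp add: add_mset_commute)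
    qed
  next
    case (R_mimp A B G1)
    have "GWFs (add_mset X (add_mset A G)) B"
      using R_mimp.IH[of "add_mset A G"] R_mimp.prems by (simp add: add_mset_commute)
    then show ?case using R_mimp.hyps GWFs.R_mimp[of A B "add_mset X G"] by (simp add: add_mset_commute)
  next
    case (LR_imp A B C D G1)
    then obtain K where K: "add_mset X G = add_mset (Imp C D) K" using mem_split[of "Imp C D" X G]
      by (metis union_single_eq_member)
    have "wfms (add_mset X (add_mset X G))" using GWFs_wf[OF GWFs.LR_imp[OF LR_imp.hyps(1-6)]] LR_imp.prems by simp
    then have "wfms (add_mset X G)" by simp
    then have "wfms K" using K by (metis wfms_add)
    then show ?case using K LR_imp.hyps GWFs.LR_imp[of A B C D K] by simp
  next
    case (R_imp A B G1)
    have "wfms (add_mset X (add_mset X G))" using R_imp.hyps R_imp.prems by simp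
    then have "wfms (add_mset X G)" by simp
    then show ?case using R_imp.hyps GWFs.R_imp by simp
  qed
  show ?case using main less.prems by blast
qed


lemma contr_multi: "GWFs (M + P) Z \<Longrightarrow> M \<subseteq># P \<Longrightarrow> GWFs P Z"
proof (induction M arbitrary: P)
  case empty then show ?case by simp
next
  case (add x M)
  then have "x \<in># P" by (meson insert_subset_eq_iff)
  then obtain P' where P: "P = add_mset x P'" by (metis multi_member_split)
  have "GWFs (add_mset x (add_mset x (M + P'))) Z" using add.prems(1) P by simp
  then have "GWFs (add_mset x (M + P')) Z" by (rule contr)
  then have "GWFs (M + P) Z" using P by simp
  moreover have "M \<subseteq># P" using add.prems(2) subset_mset.order_trans[OF mset_subset_eq_add_left[of M "{#x#}"]] by simp
  ultimately show ?case using add.IH by blast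
qed

lemma isFrm_bigOr: "\<forall>A\<in>set ds. isFrm A \<Longrightarrow> isFrm (bigOr ds)"
  by (induction ds rule: bigOr.induct) auto

lemma bigOr_intro: "\<forall>A\<in>set ds. isFrm A \<Longrightarrow> d \<in> set ds \<Longrightarrow> GWFs P d \<Longrightarrow> GWFs P (bigOr ds)"
proof (induction ds rule: bigOr.induct)
  case 1 then show ?case by simp
next
  case (2 A) then show ?case by simp
next
  case (3 A B xs)
  have f: "isFrm2 (bigOr (B # xs))" "isFrm2 A" using 3(2) isFrm_bigOr[of "B # xs"] isFrm_Frm2 by auto
  show ?case
  proof (cases "d = A")
    case True then show ?thesis using 3 f GWFs.R_or_l by simp
  next
    case False then have "GWFs P (bigOr (B # xs))" using 3 by simp
    then show ?thesis using f GWFs.R_or_r by simp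
  qed
qed

lemma mainlem:
  "GWF G D \<Longrightarrow> wfms G \<Longrightarrow> (\<forall>A\<in>#D. isFrm A) \<Longrightarrow> wfms S \<Longrightarrow> isFrm2 Z \<Longrightarrow>
   (\<forall>d\<in>#D. \<forall>P. G + S \<subseteq># P \<longrightarrow> GWFs P d \<longrightarrow> GWFs P Z) \<Longrightarrow> GWFs (G + S) Z"
proof (induction arbitrary: S Z rule: GWF.induct)
  case (id G D p)
  have "GWFs (add_mset (Atom p) G + S) (Atom p)" using id GWFs.id[of "G + S" p] by simp
  then show ?case using id.prems(5) by simp
next
  case (L_bot G D)
  then show ?case using GWFs.L_bot[of "G + S" Z] by simp
next
  case (L_and X Y G D)
  let ?A = "And X Y"
  have wX: "isFrm2 X" "isFrm2 Y" using L_and.prems(1) isFrm2_And[of X Y] by auto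
  have sub: "add_mset ?A G + S \<subseteq># add_mset X (add_mset Y G) + add_mset ?A S" by simp
  have "GWFs (add_mset X (add_mset Y G) + add_mset ?A S) Z"
  proof (rule L_and.IH)
    show "\<forall>d\<in>#D. \<forall>P. add_mset X (add_mset Y G) + add_mset ?A S \<subseteq># P \<longrightarrow> GWFs P d \<longrightarrow> GWFs P Z"
      using L_and.prems(5) sub by (meson subset_mset.order_trans)
  qed (use L_and.prems wX in simp_all)
  then have "GWFs (add_mset ?A (G + add_mset ?A S)) Z" using GWFs.L_and[of X Y "G + add_mset ?A S" Z] by (simp add: add_mset_commute)
  then have "GWFs (add_mset ?A (add_mset ?A (G + S))) Z" by simp
  then have "GWFs (add_mset ?A (G + S)) Z" by (rule contr)
  then show ?case by simp
next
  case (R_and G X D Y)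
  have fX: "isFrm X" "isFrm Y" using R_and.prems(2) by auto
  show ?case
  proof (rule R_and.IH(2))
    show "\<forall>d\<in>#add_mset Y D. \<forall>P. G + S \<subseteq># P \<longrightarrow> GWFs P d \<longrightarrow> GWFs P Z"
    proof (intro ballI allI impI)
      fix d P assume d: "d \<in># add_mset Y D" and P: "G + S \<subseteq># P" and dP: "GWFs P d"
      show "GWFs P Z"
      proof (cases "d = Y")
        case False then show ?thesis using d P dP R_and.prems(5) by auto
      next
        case True
        have wP: "wfms P" using GWFs_wf[OF dP] by simp
        have "GWFs (G + P) Z"
        proof (rule R_and.IH(1))
          show "\<forall>d\<in>#add_mset X D. \<forall>P'. G + P \<subseteq># P' \<longrightarrow> GWFs P' d \<longrightarrow> GWFs P' Z"
          proof (intro ballI allI impI)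
            fix d' P' assume d': "d' \<in># add_mset X D" and P': "G + P \<subseteq># P'" and dP': "GWFs P' d'"
            have PP': "P \<subseteq># P'" using P' by (meson mset_subset_eq_add_right subset_mset.order_trans)
            have SP': "G + S \<subseteq># P'" using P PP' by (meson subset_mset.order_trans)
            show "GWFs P' Z"
            proof (cases "d' = X")
              case False then show ?thesis using d' SP' dP' R_and.prems(5) by auto
            next
              case True
              have wP': "wfms P'" using GWFs_wf[OF dP'] by simp
              have "GWFs P' Y" using weaken[of P Y P'] dP \<open>d = Y\<close> PP' wP' by simp
              then have "GWFs P' (And X Y)" using GWFs.R_and dP' True by blast
              then show ?thesis using SP' R_and.prems(5) by auto
            qed
          qed
        qed (use R_and.prems wP fX in simp_all)
        moreover have "G \<subseteq># P" using P by (meson mset_subset_eq_add_left subset_mset.order_trans)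
        ultimately show ?thesis by (rule contr_multi)
      qed
    qed
  qed (use R_and.prems fX in simp_all)
next
  case (L_or X G D Y)
  let ?A = "Or X Y"
  have wX: "isFrm2 X" "isFrm2 Y" using L_or.prems(1) isFrm2_Or[of X Y] by auto
  have sub1: "add_mset ?A G + S \<subseteq># add_mset X G + add_mset ?A S" by simp
  have sub2: "add_mset ?A G + S \<subseteq># add_mset Y G + add_mset ?A S" by simp
  have 1: "GWFs (add_mset X G + add_mset ?A S) Z"
  proof (rule L_or.IH(1))
    show "\<forall>d\<in>#D. \<forall>P. add_mset X G + add_mset ?A S \<subseteq># P \<longrightarrow> GWFs P d \<longrightarrow> GWFs P Z"
      using L_or.prems(5) sub1 by (meson subset_mset.order_trans)
  qed (use L_or.prems wX in simp_all)
  have 2: "GWFs (add_mset Y G + add_mset ?A S) Z"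
  proof (rule L_or.IH(2))
    show "\<forall>d\<in>#D. \<forall>P. add_mset Y G + add_mset ?A S \<subseteq># P \<longrightarrow> GWFs P d \<longrightarrow> GWFs P Z"
      using L_or.prems(5) sub2 by (meson subset_mset.order_trans)
  qed (use L_or.prems wX in simp_all)
  have "GWFs (add_mset ?A (G + add_mset ?A S)) Z" using GWFs.L_or[of X "G + add_mset ?A S" Z Y] 1 2 by (simp add: add_mset_commute)
  then have "GWFs (add_mset ?A (add_mset ?A (G + S))) Z" by simp
  then have "GWFs (add_mset ?A (G + S)) Z" by (rule contr)
  then show ?case by simp
next
  case (R_or G X Y D)
  have f: "isFrm X" "isFrm Y" using R_or.prems(2) by auto
  show ?case
  proof (rule R_or.IH)
    show "\<forall>d\<in>#add_mset X (add_mset Y D). \<forall>P. G + S \<subseteq># P \<longrightarrow> GWFs P d \<longrightarrow> GWFs P Z"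
    proof (intro ballI allI impI)
      fix d P assume d: "d \<in># add_mset X (add_mset Y D)" and P: "G + S \<subseteq># P" and dP: "GWFs P d"
      consider "d = X" | "d = Y" | "d \<in># D" using d by auto
      then show "GWFs P Z"
      proof cases
        case 1 then have "GWFs P (Or X Y)" using GWFs.R_or_l[of Y P X] dP f isFrm_Frm2 by simp
        then show ?thesis using P R_or.prems(5) by auto
      next
        case 2 then have "GWFs P (Or X Y)" using GWFs.R_or_r[of X P Y] dP f isFrm_Frm2 by simp
        then show ?thesis using P R_or.prems(5) by auto
      next
        case 3 then show ?thesis using P dP R_or.prems(5) by auto
      qed
    qed
  qed (use R_or.prems f in simp_all)
next
  case (L_mimp A B G D)
  let ?M = "MImp A B"
  have wG: "wfms G" using L_mimp.prems(1) by simp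
  have sub2: "add_mset ?M G + S \<subseteq># add_mset B G + add_mset ?M S" by simp
  have R2: "GWFs (add_mset B G + add_mset ?M S) Z"
  proof (rule L_mimp.IH(2))
    show "\<forall>d\<in>#D. \<forall>P. add_mset B G + add_mset ?M S \<subseteq># P \<longrightarrow> GWFs P d \<longrightarrow> GWFs P Z"
      using L_mimp.prems(5) sub2 by (meson subset_mset.order_trans)
  qed (use L_mimp.prems L_mimp.hyps isFrm_Frm2 in simp_all)
  have "GWFs (G + add_mset ?M S) Z"
  proof (rule L_mimp.IH(1))
    show "\<forall>d\<in>#add_mset A D. \<forall>P. G + add_mset ?M S \<subseteq># P \<longrightarrow> GWFs P d \<longrightarrow> GWFs P Z"
    proof (intro ballI allI impI)
      fix d P assume d: "d \<in># add_mset A D" and P: "G + add_mset ?M S \<subseteq># P" and dP: "GWFs P d"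
      have P0: "add_mset ?M G + S \<subseteq># P" using P by simp
      show "GWFs P Z"
      proof (cases "d = A")
        case False then show ?thesis using d P0 dP L_mimp.prems(5) by auto
      next
        case True
        have wP: "wfms P" using GWFs_wf[OF dP] by simp
        have MP: "?M \<in># P" using P0 by (metis mset_subset_eqD union_iff union_single_eq_member)
        then have wM: "isFrm2 ?M" using wP by (auto simp: wfms_def)
        have 1: "GWFs (add_mset ?M P) A" using weaken1[OF dP wM] True by simp
        have "add_mset B G + add_mset ?M S \<subseteq># add_mset B P" using P by simp
        moreover have "wfms (add_mset B P)" using wP L_mimp.hyps isFrm_Frm2 by simp
        ultimately have 2: "GWFs (add_mset B P) Z" using weaken R2 by blast
        have "GWFs (add_mset ?M P) Z" using GWFs.L_mimp[OF L_mimp.hyps(1,2) 1 2] .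
        then have "GWFs ({#?M#} + P) Z" by simp
        then show ?thesis using contr_multi MP by (metis single_subset_iff)
      qed
    qed
  qed (use L_mimp.prems L_mimp.hyps wG in simp_all)
  then show ?case by simp
next
  case (R_mimp A B G D)
  then show ?case by simp
next
  case (LR_imp A B C D G Dl)
  have "GWFs ({#MImp C D, A#} + {#}) B"
  proof (rule LR_imp.IH)
  qed (use LR_imp.hyps isFrm_Frm2 in \<open>simp_all add: isFrm2.base isFrm1_def\<close>)
  then have "GWFs {#MImp C D, A#} B" by simp
  then have "GWFs (add_mset (Imp C D) (G + S)) (Imp A B)"
    using GWFs.LR_imp[of A B C D "G + S"] LR_imp.hyps LR_imp.prems by simp
  then show ?case using LR_imp.prems(5) by simp
next
  case (R_imp A B G Dl)
  have "GWFs ({#A#} + {#}) B"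
  proof (rule R_imp.IH)
  qed (use R_imp.hyps isFrm_Frm2 in simp_all)
  then have "GWFs {#A#} B" by simp
  then have "GWFs (G + S) (Imp A B)"
    using GWFs.R_imp[of A B "G + S"] R_imp.hyps R_imp.prems by simp
  then show ?case using R_imp.prems(5) by simp
qed

theorem theorem5p6:
  assumes "wfms \<Gamma>"
    and "\<forall>A\<in>#\<Delta>. isFrm A"
    and "GWF \<Gamma> \<Delta>"
    and "mset ds = \<Delta>"
  shows "GWFs \<Gamma> (bigOr ds)"
proof -
  have f: "\<forall>A\<in>set ds. isFrm A" using assms(2,4) by auto
  have "GWFs (\<Gamma> + {#}) (bigOr ds)"
  proof (rule mainlem[OF assms(3,1,2)])
    show "\<forall>d\<in>#\<Delta>. \<forall>P. \<Gamma> + {#} \<subseteq># P \<longrightarrow> GWFs P d \<longrightarrow> GWFs P (bigOr ds)"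
      using bigOr_intro[OF f] assms(4) by auto
  qed (use isFrm_bigOr[OF f] isFrm_Frm2 in simp_all)
  then show ?thesis by simp
qed

end
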